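(* Let $m\geq2$, $q$ a power of the prime $p$, $\mathcal{S}\leq\mathrm{U}_{2m+1}(\mathbb{F}_q)$ the Sylow $p$-subgroup of lower unitriangular matrices, $\mathcal{A}=\{X_{\mathbbm{1},P,\alpha}\}$ and $\mathcal{A}_0=\{X_{\mathbbm{1},P,0}\}$. Then $C_{\mathcal{S}}(\mathcal{A})\leq\mathcal{A}_0$.
   Context: $\overline{x}=x^q$ on $\mathbb{F}_{q^2}$, applied entrywise. $Q_k$ is the $k\times k$ matrix with $1$ on the skew-diagonal and $0$ elsewhere; $\mathrm{U}_{2m+1}(\mathbb{F}_q)=\{A\in\mathrm{GL}_{2m+1}(\mathbb{F}_{q^2}):\overline{A}^TQ_{2m+1}A=Q_{2m+1}\}$. $B^F=Q_mB^TQ_m$. $P$ is conjugate-skew-persymmetric if $\overline{P}^F=-P$; for a $1\times m$ vector $\alpha$, $P$ is $\alpha$-conjugate-skew-persymmetric if $P+\overline{P}^F=-Q_m\overline{\alpha}^T\alpha$. The elements of $\mathcal{S}$ are exactly $X_{D,P,\alpha}=\begin{pmatrix}(\overline{D}^F)^{-1}&0&0\\ \alpha&1&0\\ DP&-DQ_m\overline{\alpha}^T&D\end{pmatrix}$ with $D$ lower unitriangular $m\times m$, $\alpha$ a $1\times m$ vector, $P$ $\alpha$-conjugate-skew-persymmetric; $\mathcal{A}$ is the set of those with $D=\mathbbm{1}$ (identity), $\mathcal{A}_0$ those with $D=\mathbbm{1}$ and $\alpha=0$. *)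

theory Defs
  imports "Jordan_Normal_Form.Matrix"
begin

text \<open>Conjugation on F_{q^2}: x bar = x^q, applied entrywise.\<close>
definition cnj :: "nat \<Rightarrow> 'a::field \<Rightarrow> 'a" where
  "cnj q x = x ^ q"

definition cnj_mat :: "nat \<Rightarrow> 'a::field mat \<Rightarrow> 'a mat" where
  "cnj_mat q A = map_mat (cnj q) A"

definition Qmat :: "nat \<Rightarrow> 'a::field mat" where
  "Qmat k = mat k k (\<lambda>(i,j). if i + j = k - 1 then 1 else 0)"

definition flipF :: "nat \<Rightarrow> 'a::field mat \<Rightarrow> 'a mat" where
  "flipF m B = Qmat m * transpose_mat B * Qmat m"

definition unitary_group :: "nat \<Rightarrow> nat \<Rightarrow> 'a::field mat set" where
  "unitary_group q m = {A. A \<in> carrier_mat (2*m+1) (2*m+1) \<and> invertible_mat A \<and>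
      transpose_mat (cnj_mat q A) * Qmat (2*m+1) * A = Qmat (2*m+1)}"

definition lower_unitriangular :: "'a::field mat \<Rightarrow> bool" where
  "lower_unitriangular A \<longleftrightarrow> (\<forall>i<dim_row A. A $$ (i,i) = 1) \<and>
      (\<forall>i<dim_row A. \<forall>j<dim_col A. i < j \<longrightarrow> A $$ (i,j) = 0)"

definition sylowS :: "nat \<Rightarrow> nat \<Rightarrow> 'a::field mat set" where
  "sylowS q m = {A \<in> unitary_group q m. lower_unitriangular A}"

definition alpha_csp :: "nat \<Rightarrow> nat \<Rightarrow> 'a::field mat \<Rightarrow> 'a mat \<Rightarrow> bool" where
  "alpha_csp q m \<alpha> P \<longleftrightarrow>
     P + flipF m (cnj_mat q P) = - (Qmat m * transpose_mat (cnj_mat q \<alpha>) * \<alpha>)"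

text \<open>X_{1,P,alpha}, the block matrix
  [[1,0,0],[alpha,1,0],[P, -Q_m alpha-bar^T, 1]] of size (2m+1).\<close>
definition Xmat :: "nat \<Rightarrow> nat \<Rightarrow> 'a::field mat \<Rightarrow> 'a mat \<Rightarrow> 'a mat" where
  "Xmat q m P \<alpha> = mat (2*m+1) (2*m+1) (\<lambda>(i,j).
     if i < m then (if i = j then 1 else 0)
     else if i = m then (if j < m then \<alpha> $$ (0,j) else if j = m then 1 else 0)
     else (if j < m then P $$ (i - (m+1), j)
           else if j = m then - (Qmat m * transpose_mat (cnj_mat q \<alpha>)) $$ (i - (m+1), 0)
           else if i = j then 1 else 0))"

definition setA :: "nat \<Rightarrow> nat \<Rightarrow> 'a::field mat set" where
  "setA q m = {Xmat q m P \<alpha> | P \<alpha>. P \<in> carrier_mat m m \<and> \<alpha> \<in> carrier_mat 1 m \<and>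
      alpha_csp q m \<alpha> P}"

definition setA0 :: "nat \<Rightarrow> nat \<Rightarrow> 'a::field mat set" where
  "setA0 q m = {Xmat q m P (0\<^sub>m 1 m) | P. P \<in> carrier_mat m m \<and>
      alpha_csp q m (0\<^sub>m 1 m) P}"

definition centralizer :: "'a::field mat set \<Rightarrow> 'a mat set \<Rightarrow> 'a mat set" where
  "centralizer G H = {g \<in> G. \<forall>h\<in>H. g * h = h * g}"

end

theory Submission imports Defs "HOL-Number_Theory.Residues" "HOL-Computational_Algebra.Polynomial"
begin

lemma card_pow_same:
  fixes x :: "'a::{finite,field}"
  shows "x ^ card (UNIV :: 'a set) = x"
proof (cases "x = 0")
  case False
  have "x * (\<Prod>y\<in>UNIV-{0}. x * y) = x * x ^ (card (UNIV :: 'a set) - 1) * \<Prod>(UNIV-{0})"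
    by (simp add: prod.distrib mult_ac)
  also have "x * x ^ (card (UNIV :: 'a set) - 1) = x ^ Suc (card (UNIV :: 'a set) - 1)"
    by (subst power_Suc) auto
  also have "Suc (card (UNIV :: 'a set) - 1) = card (UNIV :: 'a set)"
    using finite_UNIV_card_ge_0[where ?'a = 'a] by simp
  also have "(\<Prod>y\<in>UNIV-{0}. x * y) = (\<Prod>y\<in>UNIV-{0}. y)"
    by (rule prod.reindex_bij_witness[of _ "\<lambda>y. y / x" "\<lambda>y. x * y"]) (use False in auto)
  finally show ?thesis
    by simp
qed (use finite_UNIV_card_ge_0[where ?'a = 'a] in auto)

lemma exists_trace_m1:
  fixes p q k :: nat
  assumes "prime p" and "k \<ge> 1" and "q = p ^ k"
    and card: "card (UNIV :: 'a::{finite,field} set) = q ^ 2"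
  shows "\<exists>t::'a. t + t ^ q = -1"
proof -
  have fin: "finite (UNIV :: 'a set)" by simp
  have cp: "CHAR('a) > 0" by (rule finite_imp_CHAR_pos[OF fin])
  have pc: "prime CHAR('a)" using prime_CHAR_semidom[OF cp] .
  have "CHAR('a) dvd p ^ (k*2)" using CHAR_dvd_CARD[where 'a='a] card assms(3)
    by (simp add: power_mult)
  hence "CHAR('a) dvd p" using pc prime_dvd_power by blast
  hence cpe: "CHAR('a) = p" using pc assms(1) primes_dvd_imp_eq by blast
  have qpos: "q > 1" using assms(1-3) by (metis one_less_power prime_gt_1_nat Suc_le_eq One_nat_def)
  have add: "(x + y) ^ q = x ^ q + y ^ q" for x y :: 'a
    by (rule freshmans_dream'[OF pc]) (simp add: cpe assms(3))
  have neg: "(- x) ^ q = - (x ^ q)" for x :: 'a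
  proof -
    have "(x + - x) ^ q = x ^ q + (-x) ^ q" by (rule add)
    thus ?thesis using qpos by (auto simp: power_0_left eq_neg_iff_add_eq_0 add.commute)
  qed
  have qq: "(x ^ q) ^ q = x" for x :: 'a
    using card_pow_same[of x] card by (simp add: power_mult power2_eq_square)
  define pl :: "'a poly" where "pl = monom 1 q + monom 1 1"
  have dpl: "degree pl = q" unfolding pl_def using qpos
    by (simp add: degree_add_eq_left degree_monom_eq)
  have "pl \<noteq> 0" using dpl qpos by auto
  hence "card {x. poly pl x = 0} \<le> q" using card_poly_roots_bound dpl by metis
  moreover have "q < card (UNIV :: 'a set)" using card qpos by (simp add: power2_eq_square)
  ultimately have "{x. poly pl x = 0} \<noteq> UNIV" by auto
  then obtain t0 where "poly pl t0 \<noteq> 0" by auto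
  hence y0: "t0 ^ q + t0 \<noteq> 0" unfolding pl_def by (simp add: poly_monom)
  define y where "y = t0 ^ q + t0"
  have yq: "y ^ q = y" unfolding y_def add qq by simp
  define l where "l = - (1 / y)"
  have lq: "l ^ q = l" unfolding l_def neg by (simp add: power_divide yq)
  have "l * t0 + (l * t0) ^ q = l * y" unfolding y_def by (simp add: power_mult_distrib lq algebra_simps)
  also have "\<dots> = -1" unfolding l_def using y0 y_def by simp
  finally show ?thesis by blast
qed


lemma sum_delta_mult:
  fixes f :: "nat \<Rightarrow> 'a::comm_ring_1"
  assumes "c < n"
  shows "(\<Sum>k\<in>{0..<n}. f k * (if k = c then v else 0)) = f c * v"
proof -
  have "(\<Sum>k\<in>{0..<n}. f k * (if k = c then v else 0)) = (\<Sum>k\<in>{0..<n}. if k = c then f k * v else 0)"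
    by (rule sum.cong) auto
  also have "\<dots> = f c * v" using assms by (simp add: sum.delta)
  finally show ?thesis .
qed

lemma Q_mult_left:
  assumes "A \<in> carrier_mat m k" "r < m" "c < k"
  shows "(Qmat m * A) $$ (r,c) = A $$ (m-1-r, c)"
proof -
  have "(Qmat m * A) $$ (r,c) = (\<Sum>i\<in>{0..<m}. A $$ (i,c) * (if i = m-1-r then 1 else 0))"
    using assms unfolding Qmat_def
    by (auto simp: scalar_prod_def intro!: sum.cong)
  also have "\<dots> = A $$ (m-1-r, c)" using assms by (subst sum_delta_mult) auto
  finally show ?thesis .
qed

lemma Q_mult_right:
  assumes "A \<in> carrier_mat k m" "r < k" "c < m"
  shows "(A * Qmat m) $$ (r,c) = A $$ (r, m-1-c)"
proof -
  have "(A * Qmat m) $$ (r,c) = (\<Sum>i\<in>{0..<m}. A $$ (r,i) * (if i = m-1-c then 1 else 0))"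
    using assms unfolding Qmat_def
    by (auto simp: scalar_prod_def intro!: sum.cong)
  also have "\<dots> = A $$ (r, m-1-c)" using assms by (subst sum_delta_mult) auto
  finally show ?thesis .
qed

lemma QAQ:
  assumes "A \<in> carrier_mat m m" "r < m" "c < m"
  shows "(Qmat m * A * Qmat m) $$ (r,c) = A $$ (m-1-r, m-1-c)"
proof -
  have "Qmat m \<in> carrier_mat m m" by (simp add: Qmat_def)
  hence "Qmat m * A \<in> carrier_mat m m" using assms(1) by (rule mult_carrier_mat)
  thus ?thesis using assms by (simp add: Q_mult_right Q_mult_left)
qed

lemma cnj0: "q > 0 \<Longrightarrow> cnj q (0::'a::field) = 0" by (simp add: cnj_def)
lemma cnj1: "cnj q (1::'a::field) = 1" by (simp add: cnj_def)
lemma cnj_if: "q > 0 \<Longrightarrow> cnj q (if b then (1::'a::field) else 0) = (if b then 1 else 0)"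
  by (simp add: cnj_def)

definition ej :: "nat \<Rightarrow> nat \<Rightarrow> 'a::field mat" where
  "ej m j = mat 1 m (\<lambda>(i,c). if c = j then 1 else 0)"
definition Pj :: "nat \<Rightarrow> nat \<Rightarrow> 'a::field \<Rightarrow> 'a mat" where
  "Pj m j t = mat m m (\<lambda>(r,c). if r = m-1-j \<and> c = j then t else 0)"

lemma ej_entry: "c < m \<Longrightarrow> ej m j $$ (0, c) = (if c = j then 1 else 0)"
  by (simp add: ej_def)

lemma Qe_entry:
  assumes "q > 0" "j < m" "r < m"
  shows "(Qmat m * transpose_mat (cnj_mat q (ej m j :: 'a::field mat))) $$ (r, 0) = (if r = m-1-j then 1 else 0)"
proof -
  have "transpose_mat (cnj_mat q (ej m j :: 'a mat)) \<in> carrier_mat m 1"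
    by (simp add: cnj_mat_def ej_def)
  hence "(Qmat m * transpose_mat (cnj_mat q (ej m j :: 'a mat))) $$ (r, 0)
     = transpose_mat (cnj_mat q (ej m j :: 'a mat)) $$ (m-1-r, 0)" using assms by (simp add: Q_mult_left)
  also have "\<dots> = (if r = m-1-j then 1 else 0)" using assms
    by (auto simp: cnj_mat_def ej_def cnj_def)
  finally show ?thesis .
qed

lemma csp_ej:
  assumes "q > 0" "j < m" "t + t ^ q = -1"
  shows "alpha_csp q m (ej m j) (Pj m j (t::'a::field))"
  unfolding alpha_csp_def
proof (rule eq_matI)
  fix r c assume rc: "r < dim_row (- (Qmat m * transpose_mat (cnj_mat q (ej m j)) * ej m j))"
      "c < dim_col (- (Qmat m * transpose_mat (cnj_mat q (ej m j)) * (ej m j :: 'a mat)))"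
  hence r: "r < m" and c: "c < m" by (auto simp: Qmat_def ej_def)
  have cP: "cnj_mat q (Pj m j t) \<in> carrier_mat m m" by (simp add: cnj_mat_def Pj_def)
  have "flipF m (cnj_mat q (Pj m j t)) $$ (r,c) = cnj q (Pj m j t $$ (m-1-c, m-1-r))"
    unfolding flipF_def using QAQ[of "transpose_mat (cnj_mat q (Pj m j t))" m r c] r c cP
    by (simp add: cnj_mat_def Pj_def)
  also have "\<dots> = (if r = m-1-j \<and> c = j then t ^ q else 0)"
    using r c assms by (auto simp: Pj_def cnj_def)
  finally have fl: "flipF m (cnj_mat q (Pj m j t)) $$ (r,c) = (if r = m-1-j \<and> c = j then t ^ q else 0)" .
  have "(Qmat m * transpose_mat (cnj_mat q (ej m j)) * (ej m j :: 'a mat)) $$ (r,c)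
        = (Qmat m * transpose_mat (cnj_mat q (ej m j :: 'a mat))) $$ (r, 0) * ej m j $$ (0, c)"
    using r c by (simp add: Qmat_def ej_def cnj_mat_def scalar_prod_def)
  also have "\<dots> = (if r = m-1-j \<and> c = j then 1 else 0)"
    by (simp only: Qe_entry[OF assms(1,2) r] ej_entry[OF c]) simp
  finally have rhs: "(Qmat m * transpose_mat (cnj_mat q (ej m j)) * (ej m j :: 'a mat)) $$ (r,c) = (if r = m-1-j \<and> c = j then 1 else 0)" .
  show "(Pj m j t + flipF m (cnj_mat q (Pj m j t))) $$ (r, c) =
        (- (Qmat m * transpose_mat (cnj_mat q (ej m j)) * ej m j)) $$ (r, c)"
    using r c fl rhs assms(3) unfolding Pj_def flipF_def
    by (simp add: Qmat_def cnj_mat_def ej_def)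
qed (auto simp: Pj_def ej_def flipF_def Qmat_def cnj_mat_def)


lemma sum4:
  fixes f :: "nat \<Rightarrow> 'a::comm_ring_1"
  assumes "c1 < n" "c2 < n" "c3 < n" "c4 < n"
  shows "(\<Sum>k\<in>{0..<n}. f k * ((if k = c1 then v1 else 0) + (if k = c2 then v2 else 0)
     + (if k = c3 then v3 else 0) - (if k = c4 then v4 else 0))) = f c1 * v1 + f c2 * v2 + f c3 * v3 - f c4 * v4"
  unfolding distrib_left right_diff_distrib sum.distrib sum_subtractf
  using assms by (simp add: sum_delta_mult)

lemma X_entry:
  assumes "q > 0" "j < m" "k < 2*m+1" "b < 2*m+1"
  shows "Xmat q m (Pj m j t) (ej m j) $$ (k,b) = (if k = b then 1 else 0) + (if k = m \<and> b = j then 1 else 0)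
     + (if k = 2*m-j \<and> b = j then t else 0) - (if k = 2*m-j \<and> b = m then 1 else 0)"
proof -
  consider "k < m" | "k = m" | "k > m" by linarith
  thus ?thesis
  proof cases
    case 1 thus ?thesis using assms by (auto simp: Xmat_def)
  next
    case 2 thus ?thesis using assms by (auto simp: Xmat_def ej_def)
  next
    case 3
    have km: "k - (m+1) < m" using 3 assms by auto
    have "Xmat q m (Pj m j t) (ej m j) $$ (k,b) = (if b < m then Pj m j t $$ (k - (m+1), b)
           else if b = m then - (Qmat m * transpose_mat (cnj_mat q (ej m j))) $$ (k - (m+1), 0)
           else if k = b then 1 else 0)" using 3 assms by (simp add: Xmat_def)
    also have "\<dots> = (if b < m then (if k - (m+1) = m-1-j \<and> b = j then t else 0)
           else if b = m then - (if k - (m+1) = m-1-j then 1 else 0)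
           else if k = b then 1 else 0)"
      using km assms by (simp add: Pj_def Qe_entry)
    finally show ?thesis using 3 assms by auto
  qed
qed


lemma comm_facts:
  fixes g :: "'a::field mat"
  assumes q: "q > 0" and j: "j < m" and g: "g \<in> carrier_mat (2*m+1) (2*m+1)"
    and comm: "g * Xmat q m (Pj m j t) (ej m j) = Xmat q m (Pj m j t) (ej m j) * g"
  shows "\<forall>a<2*m+1. a \<noteq> m \<and> a \<noteq> 2*m-j \<longrightarrow> g $$ (a, 2*m-j) = 0"
    and "\<forall>a<2*m+1. a \<noteq> m \<and> a \<noteq> 2*m-j \<longrightarrow> g $$ (a, m) = 0"
    and "\<forall>b<2*m+1. b \<noteq> j \<and> b \<noteq> m \<longrightarrow> g $$ (j, b) = 0"
    and "\<forall>b<2*m+1. b \<noteq> j \<and> b \<noteq> m \<longrightarrow> g $$ (m, b) = 0"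
proof -
  define n where "n = 2*m+1"
  define J where "J = 2*m-j"
  define X where "X = Xmat q m (Pj m j t) (ej m j)"
  have Jn: "J < n" "m < J" "j < n" "m < n" using j unfolding J_def n_def by auto
  have Xc: "X \<in> carrier_mat n n" unfolding X_def Xmat_def n_def by simp
  have gX: "(g * X) $$ (a,b) = g $$ (a,b) * 1 + g $$ (a,m) * (if b = j then 1 else 0)
      + g $$ (a,J) * (if b = j then t else 0) - g $$ (a,J) * (if b = m then 1 else 0)"
    if ab: "a < n" "b < n" for a b
  proof -
    have "(g * X) $$ (a,b) = (\<Sum>k\<in>{0..<n}. g $$ (a,k) * X $$ (k,b))"
      using g Xc ab unfolding n_def by (simp add: scalar_prod_def)
    also have "\<dots> = (\<Sum>k\<in>{0..<n}. g $$ (a,k) * ((if k = b then 1 else 0) + (if k = m then (if b = j then 1 else 0) else 0)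
       + (if k = J then (if b = j then t else 0) else 0) - (if k = J then (if b = m then 1 else 0) else 0)))"
      by (rule sum.cong) (use ab j q in \<open>auto simp: X_def X_entry n_def J_def\<close>)
    also have "\<dots> = g $$ (a,b) * 1 + g $$ (a,m) * (if b = j then 1 else 0)
      + g $$ (a,J) * (if b = j then t else 0) - g $$ (a,J) * (if b = m then 1 else 0)"
      by (rule sum4[where f="\<lambda>k. g $$ (a,k)"]) (use ab Jn in auto)
    finally show ?thesis .
  qed
  have Xg: "(X * g) $$ (a,b) = g $$ (a,b) * 1 + g $$ (j,b) * (if a = m then 1 else 0)
      + g $$ (j,b) * (if a = J then t else 0) - g $$ (m,b) * (if a = J then 1 else 0)"
    if ab: "a < n" "b < n" for a b
  proof -
    have "(X * g) $$ (a,b) = (\<Sum>k\<in>{0..<n}. g $$ (k,b) * X $$ (a,k))"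
      using g Xc ab unfolding n_def by (simp add: scalar_prod_def mult.commute)
    also have "\<dots> = (\<Sum>k\<in>{0..<n}. g $$ (k,b) * ((if k = a then 1 else 0) + (if k = j then (if a = m then 1 else 0) else 0)
       + (if k = j then (if a = J then t else 0) else 0) - (if k = m then (if a = J then 1 else 0) else 0)))"
      by (rule sum.cong) (use ab j q in \<open>auto simp: X_def X_entry n_def J_def\<close>)
    also have "\<dots> = g $$ (a,b) * 1 + g $$ (j,b) * (if a = m then 1 else 0)
      + g $$ (j,b) * (if a = J then t else 0) - g $$ (m,b) * (if a = J then 1 else 0)"
      by (rule sum4[where f="\<lambda>k. g $$ (k,b)"]) (use ab Jn in auto)
    finally show ?thesis .
  qed
  have E: "(g * X) $$ (a,b) = (X * g) $$ (a,b)" for a b using comm unfolding X_def by simp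
  have A: "g $$ (a, J) = 0" if "a < n" "a \<noteq> m" "a \<noteq> J" for a
    using E[of a m] gX[of a m] Xg[of a m] that Jn j by simp
  show "\<forall>a<2*m+1. a \<noteq> m \<and> a \<noteq> 2*m-j \<longrightarrow> g $$ (a, 2*m-j) = 0"
    using A unfolding n_def J_def by blast
  have B: "g $$ (a, m) = 0" if "a < n" "a \<noteq> m" "a \<noteq> J" for a
    using E[of a j] gX[of a j] Xg[of a j] that Jn j A[OF that] by simp
  show "\<forall>a<2*m+1. a \<noteq> m \<and> a \<noteq> 2*m-j \<longrightarrow> g $$ (a, m) = 0"
    using B unfolding n_def J_def by blast
  have C: "g $$ (j, b) = 0" if "b < n" "b \<noteq> j" "b \<noteq> m" for b
    using E[of m b] gX[of m b] Xg[of m b] that Jn j by simp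
  show "\<forall>b<2*m+1. b \<noteq> j \<and> b \<noteq> m \<longrightarrow> g $$ (j, b) = 0"
    using C unfolding n_def by blast
  have D: "g $$ (m, b) = 0" if "b < n" "b \<noteq> j" "b \<noteq> m" for b
    using E[of J b] gX[of J b] Xg[of J b] that Jn j C[OF that] by simp
  show "\<forall>b<2*m+1. b \<noteq> j \<and> b \<noteq> m \<longrightarrow> g $$ (m, b) = 0"
    using D unfolding n_def by blast
qed

theorem theorem3p8:
  fixes p q k m :: nat
  assumes "prime p" and "k \<ge> 1" and "q = p ^ k"
    and "card (UNIV :: 'a::{finite,field} set) = q ^ 2"
    and "m \<ge> 2"
  shows "centralizer (sylowS q m) (setA q m :: 'a mat set) \<subseteq> setA0 q m"
proof
  fix g :: "'a mat"
  assume "g \<in> centralizer (sylowS q m) (setA q m)"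
  hence gS: "g \<in> sylowS q m" and comm: "\<And>h. h \<in> setA q m \<Longrightarrow> g * h = h * g"
    unfolding centralizer_def by auto
  define n where "n = 2*m+1"
  have gc: "g \<in> carrier_mat n n" and unit: "transpose_mat (cnj_mat q g) * Qmat n * g = Qmat n"
    and lt: "lower_unitriangular g"
    using gS unfolding sylowS_def unitary_group_def n_def by auto
  have diag: "g $$ (i,i) = 1" if "i < n" for i using lt gc that unfolding lower_unitriangular_def by auto
  have up: "g $$ (i,j) = 0" if "i < n" "j < n" "i < j" for i j
    using lt gc that unfolding lower_unitriangular_def by auto
  have q0: "q > 0" using assms(1,3) by (simp add: prime_gt_0_nat)
  obtain t :: 'a where t: "t + t ^ q = -1" using exists_trace_m1[OF assms(1-4)] by blast
  have XA: "Xmat q m (Pj m j t) (ej m j) \<in> setA q m" if "j < m" for j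
  proof -
    have "Pj m j t \<in> carrier_mat m m" "(ej m j :: 'a mat) \<in> carrier_mat 1 m" by (simp_all add: Pj_def ej_def)
    thus ?thesis unfolding setA_def using csp_ej[OF q0 that t] by blast
  qed
  have gc': "g \<in> carrier_mat (2*m+1) (2*m+1)" using gc n_def by simp
  note cf = comm_facts[OF q0 _ gc' comm[OF XA]]
  have F1: "g $$ (i,b) = 0" if "i < m" "b < n" "b \<noteq> i" for i b
  proof (cases "b = m")
    case True thus ?thesis using up[of i b] that n_def by auto
  next
    case False thus ?thesis using cf(3)[of i] that n_def by auto
  qed
  have F2: "g $$ (m,b) = 0" if "b < n" "b \<noteq> m" for b
  proof (cases "b > m")
    case True thus ?thesis using up[of m b] that n_def by auto
  next
    case False
    define j0 where "j0 = (if b = 0 then 1 else (0::nat))"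
    have "j0 < m" "j0 \<noteq> b" using assms(5) unfolding j0_def by auto
    thus ?thesis using cf(4)[of j0] that False n_def by auto
  qed
  have F3: "g $$ (a,m) = 0" if "a < n" "a \<noteq> m" for a
  proof (cases "a < m")
    case True thus ?thesis using up[of a m] that n_def by auto
  next
    case False
    define j0 where "j0 = (if a = 2*m then 1 else (0::nat))"
    have "j0 < m" "a \<noteq> 2*m - j0" using assms(5) unfolding j0_def by auto
    thus ?thesis using cf(2)[of j0] that False n_def by auto
  qed
  have F4: "g $$ (a,c) = 0" if "m < c" "c < n" "a < n" "a \<noteq> c" for a c
  proof (cases "a = m")
    case True thus ?thesis using up[of a c] that n_def by auto
  next
    case False
    define j0 where "j0 = 2*m - c"
    have "j0 < m" "2*m - j0 = c" using that unfolding j0_def n_def by auto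
    thus ?thesis using cf(1)[of j0] that False n_def by auto
  qed
  define R where "R = mat m m (\<lambda>(r,c). g $$ (m+1+r, c))"
  have z: "(Qmat m * transpose_mat (cnj_mat q (0\<^sub>m 1 m :: 'a mat))) $$ (r,0) = 0" if "r < m" for r
  proof -
    have C: "transpose_mat (cnj_mat q (0\<^sub>m 1 m :: 'a mat)) \<in> carrier_mat m 1" by (simp add: cnj_mat_def)
    have "(Qmat m * transpose_mat (cnj_mat q (0\<^sub>m 1 m :: 'a mat))) $$ (r,0)
      = transpose_mat (cnj_mat q (0\<^sub>m 1 m :: 'a mat)) $$ (m-1-r, 0)"
      by (rule Q_mult_left[OF C that]) simp
    thus ?thesis using that q0 by (simp add: cnj_mat_def cnj_def)
  qed
  have gX: "g = Xmat q m R (0\<^sub>m 1 m)"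
  proof (rule eq_matI)
    fix i j assume ij: "i < dim_row (Xmat q m R (0\<^sub>m 1 m))" "j < dim_col (Xmat q m R (0\<^sub>m 1 m))"
    hence i: "i < n" and j: "j < n" by (auto simp: Xmat_def n_def)
    consider "i < m" | "i = m" | "i > m" by linarith
    thus "g $$ (i,j) = Xmat q m R (0\<^sub>m 1 m) $$ (i,j)"
    proof cases
      case 1 thus ?thesis using i j F1[of i j] diag[of i] by (auto simp: Xmat_def n_def)
    next
      case 2 thus ?thesis using i j F2[of j] diag[of i] by (auto simp: Xmat_def n_def)
    next
      case 3
      have "i - (m+1) < m" using 3 i n_def by auto
      thus ?thesis using 3 i j F3[of i] F4[of j i] diag[of i] z[of "i - (m+1)"]
        by (auto simp: Xmat_def n_def R_def)
    qed
  qed (use gc in \<open>auto simp: Xmat_def n_def\<close>)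
  have key: "g $$ (m+1+r, c) + cnj q (g $$ (2*m-c, m-1-r)) = 0" if rc: "r < m" "c < m" for r c
  proof -
    define a where "a = m-1-r"
    have a: "a < m" "n-1-a = m+1+r" using rc unfolding a_def n_def by auto
    have Tc: "transpose_mat (cnj_mat q g) \<in> carrier_mat n n" using gc by (simp add: cnj_mat_def)
    have Qc: "Qmat n \<in> carrier_mat n n" by (simp add: Qmat_def)
    have TQc: "transpose_mat (cnj_mat q g) * Qmat n \<in> carrier_mat n n" using Tc Qc by (rule mult_carrier_mat)
    have "(transpose_mat (cnj_mat q g) * Qmat n * g) $$ (a,c) = Qmat n $$ (a,c)" using unit by simp
    also have "\<dots> = 0" using a rc unfolding n_def by (simp add: Qmat_def)
    finally have u0: "(transpose_mat (cnj_mat q g) * Qmat n * g) $$ (a,c) = 0" .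
    have "(transpose_mat (cnj_mat q g) * Qmat n * g) $$ (a,c)
        = (\<Sum>k\<in>{0..<n}. (transpose_mat (cnj_mat q g) * Qmat n) $$ (a,k) * g $$ (k,c))"
    proof -
      have "a < n" "c < n" using a rc n_def by auto
      hence "(transpose_mat (cnj_mat q g) * Qmat n * g) $$ (a,c)
          = row (transpose_mat (cnj_mat q g) * Qmat n) a \<bullet> col g c" using TQc gc by (intro index_mult_mat(1)) (auto dest: carrier_matD)
      moreover have d: "dim_col (transpose_mat (cnj_mat q g) * Qmat n) = n" "dim_row g = n"
        "dim_row (transpose_mat (cnj_mat q g) * Qmat n) = n" "dim_col g = n"
        using TQc gc by (auto dest: carrier_matD)
      moreover have "row (transpose_mat (cnj_mat q g) * Qmat n) a \<bullet> col g c
        = (\<Sum>k\<in>{0..<n}. (transpose_mat (cnj_mat q g) * Qmat n) $$ (a,k) * g $$ (k,c))"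
        unfolding scalar_prod_def using d \<open>a < n\<close> \<open>c < n\<close>
        by (intro sum.cong) (simp_all only: dim_col index_row index_col atLeastLessThan_iff)
      ultimately show ?thesis by simp
    qed
    also have "\<dots> = (\<Sum>k\<in>{0..<n}. (if k = c then cnj q (g $$ (n-1-c, a)) else 0)
          + (if k = n-1-a then g $$ (n-1-a, c) else 0))"
    proof (rule sum.cong)
      fix k assume "k \<in> {0..<n}"
      hence k: "k < n" by simp
      have e: "(transpose_mat (cnj_mat q g) * Qmat n) $$ (a,k) = cnj q (g $$ (n-1-k, a))"
        using Q_mult_right[OF Tc, of a k] k a gc n_def by (simp add: cnj_mat_def)
      consider "k < m" | "k = m" | "k > m" by linarith
      thus "(transpose_mat (cnj_mat q g) * Qmat n) $$ (a,k) * g $$ (k,c)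
          = (if k = c then cnj q (g $$ (n-1-c, a)) else 0) + (if k = n-1-a then g $$ (n-1-a, c) else 0)"
      proof cases
        case 1
        have "k \<noteq> n-1-a" using 1 a n_def by auto
        thus ?thesis unfolding e using 1 F1[of k c] diag[of k] rc n_def by auto
      next
        case 2
        have "k \<noteq> n-1-a" "k \<noteq> c" using 2 a rc n_def by auto
        thus ?thesis unfolding e using 2 F2[of c] rc n_def by auto
      next
        case 3
        have kk: "n-1-k < m" "k \<noteq> c" using 3 k rc n_def by auto
        have "g $$ (n-1-k, a) = (if n-1-k = a then 1 else 0)"
          using F1[of "n-1-k" a] diag[of a] kk a n_def by auto
        hence "cnj q (g $$ (n-1-k, a)) = (if k = n-1-a then 1 else 0)"
          using q0 cnj0[OF q0] cnj1[of q] 3 k a n_def by auto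
        thus ?thesis unfolding e using kk by auto
      qed
    qed simp
    also have "\<dots> = cnj q (g $$ (n-1-c, a)) + g $$ (n-1-a, c)"
    proof -
      have "c < n" "n-1-a < n" using rc n_def by auto
      thus ?thesis by (simp add: sum.distrib sum.delta)
    qed
    finally have "cnj q (g $$ (n-1-c, a)) + g $$ (n-1-a, c) = 0" using u0 by simp
    moreover have "n-1-c = 2*m-c" using n_def by simp
    ultimately show ?thesis using a a_def by (simp add: add.commute)
  qed
  have Rc: "R \<in> carrier_mat m m" unfolding R_def by simp
  have csp: "alpha_csp q m (0\<^sub>m 1 m) R"
    unfolding alpha_csp_def
  proof (rule eq_matI)
    fix r c assume rc: "r < dim_row (- (Qmat m * transpose_mat (cnj_mat q (0\<^sub>m 1 m)) * (0\<^sub>m 1 m :: 'a mat)))"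
      "c < dim_col (- (Qmat m * transpose_mat (cnj_mat q (0\<^sub>m 1 m)) * (0\<^sub>m 1 m :: 'a mat)))"
    hence r: "r < m" and c: "c < m" by (auto simp: Qmat_def)
    have cR: "cnj_mat q R \<in> carrier_mat m m" using Rc by (simp add: cnj_mat_def)
    have "flipF m (cnj_mat q R) $$ (r,c) = cnj q (R $$ (m-1-c, m-1-r))"
      unfolding flipF_def using QAQ[of "transpose_mat (cnj_mat q R)" m r c] r c cR
      by (simp add: cnj_mat_def R_def)
    also have "\<dots> = cnj q (g $$ (m+1+(m-1-c), m-1-r))" using r c by (simp add: R_def)
    also have "m+1+(m-1-c) = 2*m-c" using c by auto
    finally have fl: "flipF m (cnj_mat q R) $$ (r,c) = cnj q (g $$ (2*m-c, m-1-r))" .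
    have "(R + flipF m (cnj_mat q R)) $$ (r,c) = R $$ (r,c) + flipF m (cnj_mat q R) $$ (r,c)"
      using r c Rc by (simp add: flipF_def Qmat_def cnj_mat_def)
    also have "\<dots> = 0" unfolding fl using key[OF r c] r c by (simp add: R_def)
    finally show "(R + flipF m (cnj_mat q R)) $$ (r, c) =
         (- (Qmat m * transpose_mat (cnj_mat q (0\<^sub>m 1 m)) * 0\<^sub>m 1 m)) $$ (r, c)"
      using r c by (simp add: Qmat_def cnj_mat_def scalar_prod_def)
  qed (auto simp: R_def flipF_def Qmat_def cnj_mat_def)
  show "g \<in> setA0 q m" unfolding setA0_def using gX Rc csp by blast
qed

end
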